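(* Let $ABC$ be a triangle with incenter $I$, and let $H_A, H_B, H_C$ be the orthocenters of the triangles $BIC$, $CIA$, $AIB$ respectively. Then the triangles $AH_BH_C$, $BH_CH_A$, $CH_AH_B$ have a common orthocenter, namely the Nagel point $N_a$ of $ABC$.
   Context: The Nagel point of $ABC$ is the common point of the lines joining each vertex to the point where the excircle opposite that vertex touches the opposite side. *)

theory Defs
  imports "HOL-Analysis.Analysis"
begin

type_synonym point = "real^2"

definition nondegenerate_triangle :: "point \<Rightarrow> point \<Rightarrow> point \<Rightarrow> bool" where
  "nondegenerate_triangle A B C \<longleftrightarrow> \<not> collinear {A, B, C}"

definition incenter :: "point \<Rightarrow> point \<Rightarrow> point \<Rightarrow> point" where
  "incenter A B C =
     (let a = dist B C; b = dist C A; c = dist A B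
      in (1 / (a + b + c)) *\<^sub>R (a *\<^sub>R A + b *\<^sub>R B + c *\<^sub>R C))"

definition is_orthocenter :: "point \<Rightarrow> point \<Rightarrow> point \<Rightarrow> point \<Rightarrow> bool" where
  "is_orthocenter H P Q R \<longleftrightarrow>
     (H - P) \<bullet> (Q - R) = 0 \<and> (H - Q) \<bullet> (R - P) = 0 \<and> (H - R) \<bullet> (P - Q) = 0"

definition excenter :: "point \<Rightarrow> point \<Rightarrow> point \<Rightarrow> point" where
  "excenter A B C =
     (let a = dist B C; b = dist C A; c = dist A B
      in (1 / (- a + b + c)) *\<^sub>R ((- a) *\<^sub>R A + b *\<^sub>R B + c *\<^sub>R C))"

definition excircle_touch :: "point \<Rightarrow> point \<Rightarrow> point \<Rightarrow> point" where
  "excircle_touch A B C =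
     (let J = excenter A B C
      in B + (((J - B) \<bullet> (C - B)) / ((C - B) \<bullet> (C - B))) *\<^sub>R (C - B))"

definition is_nagel_point :: "point \<Rightarrow> point \<Rightarrow> point \<Rightarrow> point \<Rightarrow> bool" where
  "is_nagel_point N A B C \<longleftrightarrow>
     collinear {A, excircle_touch A B C, N} \<and>
     collinear {B, excircle_touch B C A, N} \<and>
     collinear {C, excircle_touch C A B, N}"

end

theory Submission
  imports Defs
begin

definition det2 :: "real^2 \<Rightarrow> real^2 \<Rightarrow> real" where
  "det2 p q = p$1 * q$2 - p$2 * q$1"

lemma inner_comb:
  fixes u v :: "'a::real_inner"
  shows "(x1 *\<^sub>R u + y1 *\<^sub>R v) \<bullet> (x2 *\<^sub>R u + y2 *\<^sub>R v) =
     x1*x2*(u\<bullet>u) + (x1*y2+y1*x2)*(u\<bullet>v) + y1*y2*(v\<bullet>v)"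
  by (simp add: inner_add_left inner_add_right inner_commute[of v u] algebra_simps)

lemma det2_comb:
  "det2 (x1 *\<^sub>R u + y1 *\<^sub>R v) (x2 *\<^sub>R u + y2 *\<^sub>R v) = (x1*y2 - y1*x2) * det2 u v"
  by (simp add: det2_def algebra_simps)

lemma inner2: "(w::real^2) \<bullet> p = w$1 * p$1 + w$2 * p$2"
  by (simp add: inner_vec_def sum_2)

lemma perp_zero:
  fixes w p q :: "real^2"
  assumes "det2 p q \<noteq> 0" "w \<bullet> p = 0" "w \<bullet> q = 0"
  shows "w = 0"
proof -
  have e1: "w$1 * p$1 + w$2 * p$2 = 0" "w$1 * q$1 + w$2 * q$2 = 0"
    using assms(2,3) by (simp_all add: inner2)
  have "w$1 * det2 p q = 0"
    unfolding det2_def using e1 by algebra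
  hence 1: "w$1 = 0" using assms(1) by simp
  have "w$2 * det2 p q = 0"
    unfolding det2_def using e1 by algebra
  hence 2: "w$2 = 0" using assms(1) by simp
  show ?thesis using 1 2 by (simp add: vec_eq_iff forall_2)
qed

lemma noncol_det:
  fixes A B C :: "real^2"
  assumes "\<not> collinear {A, B, C}"
  shows "det2 (B - A) (C - A) \<noteq> 0"
proof
  assume d: "det2 (B - A) (C - A) = 0"
  define u where "u = B - A"
  define v where "v = C - A"
  have d': "u$1 * v$2 = u$2 * v$1" using d by (simp add: det2_def u_def v_def)
  have "collinear {0, u, v}"
  proof (cases "u = 0")
    case True thus ?thesis by (simp add: collinear_lemma)
  next
    case False
    then have "u$1 \<noteq> 0 \<or> u$2 \<noteq> 0" by (simp add: vec_eq_iff forall_2)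
    then have "\<exists>k. v = k *\<^sub>R u"
    proof
      assume h: "u$1 \<noteq> 0"
      have "v = (v$1 / u$1) *\<^sub>R u"
        using h d' by (simp add: vec_eq_iff forall_2 field_simps)
      thus ?thesis by blast
    next
      assume h: "u$2 \<noteq> 0"
      have "v = (v$2 / u$2) *\<^sub>R u"
        using h d' by (simp add: vec_eq_iff forall_2 field_simps)
      thus ?thesis by blast
    qed
    thus ?thesis by (auto simp: collinear_lemma)
  qed
  moreover have "collinear {B, A, C} \<longleftrightarrow> collinear {0, u, v}"
    unfolding u_def v_def by (rule collinear_3) simp
  moreover have "{B, A, C} = {A, B, C}" by auto
  ultimately show False using assms by simp
qed

lemma tri_strict:
  fixes A B C :: "real^2"
  assumes "\<not> collinear {A, B, C}"
  shows "dist B C < dist C A + dist A B"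
proof -
  have "dist B C \<le> dist B A + dist A C" by (rule dist_triangle)
  moreover have "dist B C \<noteq> dist B A + dist A C"
  proof
    assume "dist B C = dist B A + dist A C"
    then have "between (B, C) A" by (simp add: between)
    then have "collinear {B, A, C}" by (rule between_imp_collinear)
    moreover have "{B, A, C} = {A, B, C}" by auto
    ultimately show False using assms by simp
  qed
  ultimately show ?thesis by (simp add: dist_commute)
qed


lemma diff_comb:
  fixes A u v :: "'a::real_vector"
  shows "(A + x1 *\<^sub>R u + y1 *\<^sub>R v) - (A + x2 *\<^sub>R u + y2 *\<^sub>R v) = (x1-x2) *\<^sub>R u + (y1-y2) *\<^sub>R v"
  by (simp add: algebra_simps)

lemma bary:
  fixes A B C :: "'a::real_vector"
  assumes "s = wa + wb + wc" "s \<noteq> 0"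
  shows "(1/s) *\<^sub>R (wa *\<^sub>R A + wb *\<^sub>R B + wc *\<^sub>R C) = A + (wb/s) *\<^sub>R (B - A) + (wc/s) *\<^sub>R (C - A)"
proof -
  have "wa/s + wb/s + wc/s = (wa+wb+wc)/s" by (simp add: add_divide_distrib)
  also have "... = 1" using assms by simp
  finally have "wa/s + wb/s + wc/s = 1" .
  then have eqA: "(wa/s) *\<^sub>R A + (wb/s) *\<^sub>R A + (wc/s) *\<^sub>R A = A"
    by (metis scaleR_add_left scaleR_one)
  have "A + (wb/s) *\<^sub>R (B - A) + (wc/s) *\<^sub>R (C - A) =
     ((wa/s) *\<^sub>R A + (wb/s) *\<^sub>R A + (wc/s) *\<^sub>R A) + (wb/s) *\<^sub>R (B - A) + (wc/s) *\<^sub>R (C - A)"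
    by (simp only: eqA)
  also have "\<dots> = (1/s) *\<^sub>R (wa *\<^sub>R A + wb *\<^sub>R B + wc *\<^sub>R C)"
    by (simp add: algebra_simps divide_inverse)
  finally show ?thesis by simp
qed

lemma incenter_cyc: "incenter B C A = incenter A B C"
  by (simp add: incenter_def Let_def dist_commute algebra_simps)


lemma dotc:
  fixes A u v :: "'a::real_inner"
  shows "(A + x1 *\<^sub>R u + y1 *\<^sub>R v - (A + x2 *\<^sub>R u + y2 *\<^sub>R v)) \<bullet> (A + x3 *\<^sub>R u + y3 *\<^sub>R v - (A + x4 *\<^sub>R u + y4 *\<^sub>R v))
   = (x1-x2)*(x3-x4)*(u\<bullet>u) + ((x1-x2)*(y3-y4)+(y1-y2)*(x3-x4))*(u\<bullet>v) + (y1-y2)*(y3-y4)*(v\<bullet>v)"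
  by (simp only: diff_comb inner_comb)

lemma detc:
  fixes A u v :: "real^2"
  shows "det2 (A + x1 *\<^sub>R u + y1 *\<^sub>R v - (A + x2 *\<^sub>R u + y2 *\<^sub>R v)) (A + x3 *\<^sub>R u + y3 *\<^sub>R v - (A + x4 *\<^sub>R u + y4 *\<^sub>R v))
   = ((x1-x2)*(y3-y4) - (y1-y2)*(x3-x4)) * det2 u v"
  by (simp only: diff_comb det2_comb)

lemma setup_tri:
  fixes A B C :: point
  assumes nc: "\<not> collinear {A, B, C}"
  defines "a \<equiv> dist B C" and "b \<equiv> dist C A" and "c \<equiv> dist A B"
  shows "a < b + c" "b < c + a" "c < a + b"
    "(B - A) \<bullet> (B - A) = c^2" "(C - A) \<bullet> (C - A) = b^2"
    "(B - A) \<bullet> (C - A) = (b^2 + c^2 - a^2) / 2"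
    "det2 (B - A) (C - A) \<noteq> 0"
proof -
  have nc2: "\<not> collinear {B, C, A}" and nc3: "\<not> collinear {C, A, B}"
    using nc by (simp_all add: insert_commute)
  show "a < b + c" using tri_strict[OF nc] by (simp add: a_def b_def c_def)
  show "b < c + a" using tri_strict[OF nc2] by (simp add: a_def b_def c_def add.commute)
  show "c < a + b" using tri_strict[OF nc3] by (simp add: a_def b_def c_def add.commute)
  show uu: "(B - A) \<bullet> (B - A) = c^2"
    by (simp add: c_def dist_norm power2_norm_eq_inner[symmetric] norm_minus_commute)
  show vv: "(C - A) \<bullet> (C - A) = b^2"
    by (simp add: b_def dist_norm power2_norm_eq_inner[symmetric])
  have "a^2 = ((C - A) - (B - A)) \<bullet> ((C - A) - (B - A))"
    by (simp add: a_def dist_norm power2_norm_eq_inner[symmetric] norm_minus_commute)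
  also have "\<dots> = (C - A) \<bullet> (C - A) - 2 * ((B - A) \<bullet> (C - A)) + (B - A) \<bullet> (B - A)"
    by (simp add: inner_diff_left inner_diff_right inner_commute)
  finally show "(B - A) \<bullet> (C - A) = (b^2 + c^2 - a^2) / 2" using uu vv by simp
  show "det2 (B - A) (C - A) \<noteq> 0" by (rule noncol_det[OF nc])
qed

lemma orthoA:
  fixes A B C I H :: point
  assumes nc: "\<not> collinear {A, B, C}" and I: "I = incenter A B C"
    and H: "is_orthocenter H B I C"
  shows "H = (1 / (dist C A + dist A B - dist B C)) *\<^sub>R
     (dist B C *\<^sub>R A + (dist A B - dist B C) *\<^sub>R B + (dist C A - dist B C) *\<^sub>R C)"
proof -
  define a b c where "a = dist B C" and "b = dist C A" and "c = dist A B"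
  define u v where "u = B - A" and "v = C - A"
  note st = setup_tri[OF nc, folded a_def b_def c_def u_def v_def]
  have pB: "B = A + 1 *\<^sub>R u + 0 *\<^sub>R v" by (simp add: u_def)
  have pC: "C = A + 0 *\<^sub>R u + 1 *\<^sub>R v" by (simp add: v_def)
  have ppos: "a + b + c > 0" using st by simp
  have qpos: "b + c - a > 0" using st by simp
  have "I = (1/(a+b+c)) *\<^sub>R (a *\<^sub>R A + b *\<^sub>R B + c *\<^sub>R C)"
    by (simp add: I incenter_def Let_def a_def b_def c_def)
  also have "\<dots> = A + (b/(a+b+c)) *\<^sub>R u + (c/(a+b+c)) *\<^sub>R v"
    using ppos by (simp add: bary u_def v_def)
  finally have pI: "I = A + (b/(a+b+c)) *\<^sub>R u + (c/(a+b+c)) *\<^sub>R v" .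
  define H0 where "H0 = A + ((c-a)/(b+c-a)) *\<^sub>R u + ((b-a)/(b+c-a)) *\<^sub>R v"
  have rhs: "(1 / (b + c - a)) *\<^sub>R (a *\<^sub>R A + (c - a) *\<^sub>R B + (b - a) *\<^sub>R C) = H0"
    unfolding H0_def u_def v_def using qpos by (intro bary) auto
  have e1: "(H0 - B) \<bullet> (I - C) = 0"
    apply (simp only: H0_def pI pB pC dotc st)
    using qpos ppos by (simp add: field_simps power2_eq_square) algebra
  have e2: "(H0 - C) \<bullet> (B - I) = 0"
    apply (simp only: H0_def pI pB pC dotc st)
    using qpos ppos by (simp add: field_simps power2_eq_square) algebra
  have d: "det2 (I - C) (B - I) \<noteq> 0"
  proof -
    have apos: "a > 0" using st by simp
    have aux: "(b/p - 0)*(0 - c/p) - (c/p - 1)*(1 - b/p) = a/p"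
      if "p \<noteq> 0" "p = a + b + c" for p
      using that(1) apply (simp add: field_simps) using that(2) by algebra
    have "(b/(a+b+c) - 0)*(0 - c/(a+b+c)) - (c/(a+b+c) - 1)*(1 - b/(a+b+c)) = a/(a+b+c)"
      using ppos by (intro aux) auto
    then show ?thesis
      apply (simp only: pI pB pC detc)
      using apos ppos st by simp
  qed
  have h1: "(H - B) \<bullet> (I - C) = 0" and h2: "(H - C) \<bullet> (B - I) = 0"
    using H by (simp_all add: is_orthocenter_def)
  have "H - H0 = 0"
  proof (rule perp_zero[OF d])
    have "(H - H0) \<bullet> (I - C) = (H - B) \<bullet> (I - C) - (H0 - B) \<bullet> (I - C)"
      by (simp add: inner_diff_left)
    then show "(H - H0) \<bullet> (I - C) = 0" using h1 e1 by simp
    have "(H - H0) \<bullet> (B - I) = (H - C) \<bullet> (B - I) - (H0 - C) \<bullet> (B - I)"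
      by (simp add: inner_diff_left)
    then show "(H - H0) \<bullet> (B - I) = 0" using h2 e2 by simp
  qed
  then show ?thesis using rhs by (simp add: a_def b_def c_def)
qed


lemma indep:
  fixes u v :: "real^2"
  assumes "det2 u v \<noteq> 0" "x *\<^sub>R u + y *\<^sub>R v = 0"
  shows "x = 0 \<and> y = 0"
proof -
  have "x * det2 u v = det2 (x *\<^sub>R u + y *\<^sub>R v) (0 *\<^sub>R u + 1 *\<^sub>R v)"
    by (simp add: det2_def algebra_simps)
  also have "\<dots> = 0" using assms(2) by (simp add: det2_def)
  finally have 1: "x * det2 u v = 0" .
  have "y * det2 u v = det2 (1 *\<^sub>R u + 0 *\<^sub>R v) (x *\<^sub>R u + y *\<^sub>R v)"
    by (simp add: det2_def algebra_simps)
  also have "\<dots> = 0" using assms(2) by (simp add: det2_def)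
  finally have 2: "y * det2 u v = 0" .
  show ?thesis using 1 2 assms(1) by simp
qed

lemma touch:
  fixes A B C :: point
  assumes nc: "\<not> collinear {A, B, C}"
  shows "excircle_touch A B C = B + ((dist B C + dist C A - dist A B) / (2 * dist B C)) *\<^sub>R (C - B)"
proof -
  define a b c where "a = dist B C" and "b = dist C A" and "c = dist A B"
  define u v where "u = B - A" and "v = C - A"
  note st = setup_tri[OF nc, folded a_def b_def c_def u_def v_def]
  have pB: "B = A + 1 *\<^sub>R u + 0 *\<^sub>R v" by (simp add: u_def)
  have pC: "C = A + 0 *\<^sub>R u + 1 *\<^sub>R v" by (simp add: v_def)
  have apos: "a > 0" using st by simp
  have qpos: "b + c - a > 0" using st by simp
  define J where "J = excenter A B C"
  have "J = (1/(- a + b + c)) *\<^sub>R ((- a) *\<^sub>R A + b *\<^sub>R B + c *\<^sub>R C)"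
    by (simp add: J_def excenter_def Let_def a_def b_def c_def)
  also have "\<dots> = A + (b/(- a + b + c)) *\<^sub>R u + (c/(- a + b + c)) *\<^sub>R v"
    unfolding u_def v_def using qpos by (intro bary) auto
  finally have pJ: "J = A + (b/(- a + b + c)) *\<^sub>R u + (c/(- a + b + c)) *\<^sub>R v" .
  have aux: "(b/q - 1)*(0 - 1)*(c^2) + ((b/q - 1)*(1 - 0) + (c/q - 0)*(0 - 1))*((b^2 + c^2 - a^2) / 2) + (c/q - 0)*(1 - 0)*(b^2)
       = a * (a + b - c) / 2" if "q \<noteq> 0" "q = - a + b + c" for q
    using that(1) apply (simp add: field_simps) using that(2) by algebra
  have d1: "(J - B) \<bullet> (C - B) = a * (a + b - c) / 2"
    apply (simp only: pJ pB pC dotc st)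
    using qpos by (intro aux) auto
  have d2: "(C - B) \<bullet> (C - B) = a^2"
    by (simp add: a_def dist_norm power2_norm_eq_inner[symmetric] norm_minus_commute)
  have "(J - B) \<bullet> (C - B) / ((C - B) \<bullet> (C - B)) = (a + b - c) / (2 * a)"
    unfolding d1 d2 using apos by (simp add: field_simps power2_eq_square)
  then show ?thesis
    by (simp add: excircle_touch_def J_def[symmetric] a_def b_def c_def)
qed


lemma nagel:
  fixes A B C N :: point
  assumes nc: "\<not> collinear {A, B, C}" and NN: "is_nagel_point N A B C"
  shows "N = (1 / (dist B C + dist C A + dist A B)) *\<^sub>R
     ((dist C A + dist A B - dist B C) *\<^sub>R A + (dist A B + dist B C - dist C A) *\<^sub>R B
       + (dist B C + dist C A - dist A B) *\<^sub>R C)"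
proof -
  define a b c where "a = dist B C" and "b = dist C A" and "c = dist A B"
  define u v where "u = B - A" and "v = C - A"
  note st = setup_tri[OF nc, folded a_def b_def c_def u_def v_def]
  have nc2: "\<not> collinear {B, C, A}" using nc by (simp add: insert_commute)
  have apos: "a > 0" and bpos: "b > 0" and ppos: "a + b + c > 0"
    and t1: "a + b - c > 0" and t2: "b + c - a > 0" using st by simp_all
  have dn: "det2 u v \<noteq> 0" using st by simp
  define tA where "tA = (a + b - c) / (2 * a)"
  define tB where "tB = (b + c - a) / (2 * b)"
  have htA: "2 * a * tA = a + b - c" using apos by (simp add: tA_def)
  have htB: "2 * b * tB = b + c - a" using bpos by (simp add: tB_def)
  have tApos: "tA > 0" using apos t1 by (simp add: tA_def)
  define TA where "TA = excircle_touch A B C"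
  define TB where "TB = excircle_touch B C A"
  have "TA = B + tA *\<^sub>R (C - B)"
    using touch[OF nc] by (simp add: TA_def tA_def a_def b_def c_def)
  then have pTA: "TA = A + (1 - tA) *\<^sub>R u + tA *\<^sub>R v"
    by (simp add: u_def v_def algebra_simps)
  have "TB = C + tB *\<^sub>R (A - C)"
    using touch[OF nc2] by (simp add: TB_def tB_def a_def b_def c_def)
  then have pTB: "TB = A + 0 *\<^sub>R u + (1 - tB) *\<^sub>R v"
    by (simp add: u_def v_def algebra_simps)
  have c1: "collinear {TA, N, A}" and c2: "collinear {TB, N, B}"
    using NN by (simp_all add: is_nagel_point_def TA_def TB_def insert_commute)
  have "TA \<noteq> A"
  proof
    assume h: "TA = A"
    have "A + (1 - tA) *\<^sub>R u + tA *\<^sub>R v = A" using h pTA by metis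
    then have "(1 - tA) *\<^sub>R u + tA *\<^sub>R v = 0" by (simp add: add.assoc)
    from indep[OF dn this] tApos show False by simp
  qed
  then obtain k where k: "N = k *\<^sub>R TA + (1 - k) *\<^sub>R A"
    using c1 by (auto simp: collinear_3_expand)
  have N1: "N = A + (k * (1 - tA)) *\<^sub>R u + (k * tA) *\<^sub>R v"
    unfolding k pTA by (simp add: algebra_simps)
  have "TB \<noteq> B"
  proof
    assume h: "TB = B"
    have pB: "B = A + 1 *\<^sub>R u + 0 *\<^sub>R v" by (simp add: u_def)
    have "A + 0 *\<^sub>R u + (1 - tB) *\<^sub>R v - (A + 1 *\<^sub>R u + 0 *\<^sub>R v) = 0"
      by (metis h pTB pB diff_self)
    then have "(0 - 1) *\<^sub>R u + ((1 - tB) - 0) *\<^sub>R v = 0" by (simp only: diff_comb)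
    from indep[OF dn this] show False by simp
  qed
  then obtain l where l: "N = l *\<^sub>R TB + (1 - l) *\<^sub>R B"
    using c2 by (auto simp: collinear_3_expand)
  have N2: "N = A + (1 - l) *\<^sub>R u + (l * (1 - tB)) *\<^sub>R v"
    unfolding l pTB by (simp add: u_def v_def algebra_simps)
  have "(A + (k * (1 - tA)) *\<^sub>R u + (k * tA) *\<^sub>R v) - (A + (1 - l) *\<^sub>R u + (l * (1 - tB)) *\<^sub>R v) = 0"
    by (metis N1 N2 diff_self)
  then have "(k * (1 - tA) - (1 - l)) *\<^sub>R u + (k * tA - l * (1 - tB)) *\<^sub>R v = 0"
    by (simp only: diff_comb)
  from indep[OF dn this] have ex: "k * (1 - tA) = 1 - l" and ey: "k * tA = l * (1 - tB)"
    by simp_all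
  have l_eq: "l = 1 - k * (1 - tA)" using ex by simp
  have hD: "k * (tA + (1 - tA) * (1 - tB)) = 1 - tB"
    using ey unfolding l_eq by (simp add: algebra_simps)
  have D1: "2 * a * (1 - tA) = a - b + c" using htA by (simp add: algebra_simps)
  have D2: "2 * b * (1 - tB) = a + b - c" using htB by (simp add: algebra_simps)
  have "4 * a * b * (tA + (1 - tA) * (1 - tB)) = 2 * b * (2 * a * tA) + (2 * a * (1 - tA)) * (2 * b * (1 - tB))"
    by (simp add: algebra_simps)
  also have "\<dots> = (a + b - c) * (a + b + c)"
    unfolding htA D1 D2 by (simp add: algebra_simps)
  finally have D3: "4 * a * b * (tA + (1 - tA) * (1 - tB)) = (a + b - c) * (a + b + c)" .
  have "(a + b - c) * (k * (a + b + c)) = k * (4 * a * b * (tA + (1 - tA) * (1 - tB)))"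
    unfolding D3 by (simp add: algebra_simps)
  also have "\<dots> = 4 * a * b * (k * (tA + (1 - tA) * (1 - tB)))" by (simp add: algebra_simps)
  also have "\<dots> = 2 * a * (2 * b * (1 - tB))" unfolding hD by (simp add: algebra_simps)
  also have "\<dots> = (a + b - c) * (2 * a)" unfolding D2 by (simp add: algebra_simps)
  finally have "(a + b - c) * (k * (a + b + c)) = (a + b - c) * (2 * a)" .
  then have kp: "k * (a + b + c) = 2 * a" using t1 by simp
  have k2: "k = 2 * a / (a + b + c)" using kp ppos by (simp add: field_simps)
  have x1: "k * (1 - tA) = (c + a - b) / (a + b + c)"
    using ppos htA unfolding k2 by (simp add: field_simps)
  have y1: "k * tA = (a + b - c) / (a + b + c)"
    using ppos htA unfolding k2 by (simp add: field_simps)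
  have rhs: "(1 / (a + b + c)) *\<^sub>R ((b + c - a) *\<^sub>R A + (c + a - b) *\<^sub>R B + (a + b - c) *\<^sub>R C)
     = A + ((c + a - b) / (a + b + c)) *\<^sub>R u + ((a + b - c) / (a + b + c)) *\<^sub>R v"
    unfolding u_def v_def using ppos by (intro bary) auto
  have "N = (1 / (a + b + c)) *\<^sub>R ((b + c - a) *\<^sub>R A + (c + a - b) *\<^sub>R B + (a + b - c) *\<^sub>R C)"
    unfolding rhs N1 x1 y1 ..
  then show ?thesis by (simp add: a_def b_def c_def)
qed


lemma bary_rot1:
  fixes A B C :: "'a::real_vector"
  assumes "s = wa + wb + wc" "s \<noteq> 0"
  shows "(1/s) *\<^sub>R (wb *\<^sub>R B + wc *\<^sub>R C + wa *\<^sub>R A) = A + (wb/s) *\<^sub>R (B - A) + (wc/s) *\<^sub>R (C - A)"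
proof -
  have eq: "wb *\<^sub>R B + wc *\<^sub>R C + wa *\<^sub>R A = wa *\<^sub>R A + wb *\<^sub>R B + wc *\<^sub>R C" by (simp add: algebra_simps)
  show ?thesis unfolding eq by (rule bary[OF assms])
qed

lemma bary_rot2:
  fixes A B C :: "'a::real_vector"
  assumes "s = wa + wb + wc" "s \<noteq> 0"
  shows "(1/s) *\<^sub>R (wc *\<^sub>R C + wa *\<^sub>R A + wb *\<^sub>R B) = A + (wb/s) *\<^sub>R (B - A) + (wc/s) *\<^sub>R (C - A)"
proof -
  have eq: "wc *\<^sub>R C + wa *\<^sub>R A + wb *\<^sub>R B = wa *\<^sub>R A + wb *\<^sub>R B + wc *\<^sub>R C" by (simp add: algebra_simps)
  show ?thesis unfolding eq by (rule bary[OF assms])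
qed

lemma key:
  fixes A B C HB HC N :: point
  assumes nc: "\<not> collinear {A, B, C}"
    and HB: "HB = (1 / (dist A B + dist B C - dist C A)) *\<^sub>R
     (dist C A *\<^sub>R B + (dist B C - dist C A) *\<^sub>R C + (dist A B - dist C A) *\<^sub>R A)"
    and HC: "HC = (1 / (dist B C + dist C A - dist A B)) *\<^sub>R
     (dist A B *\<^sub>R C + (dist C A - dist A B) *\<^sub>R A + (dist B C - dist A B) *\<^sub>R B)"
    and NN: "N = (1 / (dist B C + dist C A + dist A B)) *\<^sub>R
     ((dist C A + dist A B - dist B C) *\<^sub>R A + (dist A B + dist B C - dist C A) *\<^sub>R B
       + (dist B C + dist C A - dist A B) *\<^sub>R C)"
  shows "is_orthocenter N A HB HC"
proof -
  define a b c where "a = dist B C" and "b = dist C A" and "c = dist A B"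
  define u v where "u = B - A" and "v = C - A"
  note st = setup_tri[OF nc, folded a_def b_def c_def u_def v_def]
  have ppos: "a + b + c > 0" and q2: "c + a - b > 0" and q3: "a + b - c > 0"
    using st by simp_all
  have pHB: "HB = A + (b / (c + a - b)) *\<^sub>R u + ((a - b) / (c + a - b)) *\<^sub>R v"
    unfolding HB a_def[symmetric] b_def[symmetric] c_def[symmetric] u_def v_def
    using q2 by (intro bary_rot1) auto
  have pHC: "HC = A + ((a - c) / (a + b - c)) *\<^sub>R u + (c / (a + b - c)) *\<^sub>R v"
    unfolding HC a_def[symmetric] b_def[symmetric] c_def[symmetric] u_def v_def
    using q3 by (intro bary_rot2) auto
  have pN: "N = A + ((c + a - b) / (a + b + c)) *\<^sub>R u + ((a + b - c) / (a + b + c)) *\<^sub>R v"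
    unfolding NN a_def[symmetric] b_def[symmetric] c_def[symmetric] u_def v_def
    using ppos by (intro bary) auto
  have uu: "u \<bullet> u = c^2" and vv: "v \<bullet> v = b^2" and uv: "u \<bullet> v = (b^2 + c^2 - a^2) / 2"
    using st by simp_all
  define xB yB xC yC xN yN where "xB = b / (c + a - b)" and "yB = (a - b) / (c + a - b)"
    and "xC = (a - c) / (a + b - c)" and "yC = c / (a + b - c)"
    and "xN = (c + a - b) / (a + b + c)" and "yN = (a + b - c) / (a + b + c)"
  have dNA: "N - A = xN *\<^sub>R u + yN *\<^sub>R v" unfolding pN xN_def yN_def by simp
  have dHCA: "HC - A = xC *\<^sub>R u + yC *\<^sub>R v" unfolding pHC xC_def yC_def by simp
  have dAHB: "A - HB = (- xB) *\<^sub>R u + (- yB) *\<^sub>R v" unfolding pHB xB_def yB_def by simp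
  have dBC: "HB - HC = (xB - xC) *\<^sub>R u + (yB - yC) *\<^sub>R v"
    unfolding pHB pHC xB_def yB_def xC_def yC_def by (rule diff_comb)
  have dNB: "N - HB = (xN - xB) *\<^sub>R u + (yN - yB) *\<^sub>R v"
    unfolding pHB pN xB_def yB_def xN_def yN_def by (rule diff_comb)
  have dNC: "N - HC = (xN - xC) *\<^sub>R u + (yN - yC) *\<^sub>R v"
    unfolding pHC pN xC_def yC_def xN_def yN_def by (rule diff_comb)
  have e1: "(N - A) \<bullet> (HB - HC) = 0"
    unfolding dNA dBC inner_comb uu uv vv xB_def yB_def xC_def yC_def xN_def yN_def
    using ppos q2 q3 by (simp add: field_simps power2_eq_square) algebra
  have e2: "(N - HB) \<bullet> (HC - A) = 0"
    unfolding dNB dHCA inner_comb uu uv vv xB_def yB_def xC_def yC_def xN_def yN_def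
    using ppos q2 q3 by (simp add: field_simps power2_eq_square) algebra
  have e3: "(N - HC) \<bullet> (A - HB) = 0"
    unfolding dNC dAHB inner_comb uu uv vv xB_def yB_def xC_def yC_def xN_def yN_def
    using ppos q2 q3 by (simp add: field_simps power2_eq_square) algebra
  show ?thesis using e1 e2 e3 by (simp add: is_orthocenter_def)
qed


theorem proposition4p1:
  fixes A B C I HA HB HC N :: point
  assumes "nondegenerate_triangle A B C"
    and "I = incenter A B C"
    and "is_orthocenter HA B I C"
    and "is_orthocenter HB C I A"
    and "is_orthocenter HC A I B"
    and "is_nagel_point N A B C"
  shows "is_orthocenter N A HB HC \<and> is_orthocenter N B HC HA \<and> is_orthocenter N C HA HB"
proof -
  have nc: "\<not> collinear {A, B, C}" using assms(1) by (simp add: nondegenerate_triangle_def)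
  have nc2: "\<not> collinear {B, C, A}" and nc3: "\<not> collinear {C, A, B}"
    using nc by (simp_all add: insert_commute)
  have I2: "I = incenter B C A" unfolding assms(2) by (metis incenter_cyc)
  have I3: "I = incenter C A B" unfolding assms(2) by (metis incenter_cyc)
  note hA = orthoA[OF nc assms(2) assms(3)]
  note hB = orthoA[OF nc2 I2 assms(4)]
  note hC = orthoA[OF nc3 I3 assms(5)]
  have N2: "is_nagel_point N B C A" and N3: "is_nagel_point N C A B"
    using assms(6) by (auto simp: is_nagel_point_def)
  have 1: "is_orthocenter N A HB HC" by (rule key[OF nc hB hC nagel[OF nc assms(6)]])
  have 2: "is_orthocenter N B HC HA" by (rule key[OF nc2 hC hA nagel[OF nc2 N2]])
  have 3: "is_orthocenter N C HA HB" by (rule key[OF nc3 hA hB nagel[OF nc3 N3]])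
  show ?thesis using 1 2 3 by blast
qed

end
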